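(* Let $\delta\in(0,1)$, let $\varepsilon\in\{\pm1\}^n$ have independent Rademacher entries, and let $e_j$ be the $j$-th canonical basis vector of $\mathbb{R}^n$. Then $$\mathbb{P}\Big\{\max_{j=1,\dots,n}\|e_j^\top W\,\mathrm{diag}(\varepsilon)\,U\bar D\|_2\geqslant\sqrt{\tfrac{d_e}{n}}+\sqrt{\tfrac{8\log(n/\delta)}{n}}\Big\}\leqslant\delta .$$
   Context: Let $A\in\mathbb{R}^{n\times d}$, $A\neq0$, with $n\geqslant d$ and $n$ a power of $2$, $\Lambda\in\mathbb{R}^{d\times d}$ diagonal with $\Lambda\succeq I_d$, $\nu>0$. Let $A(A^\top A+\nu^2\Lambda)^{-1/2}=UDV^\top$ be a thin SVD ($U\in\mathbb{R}^{n\times d}$ with orthonormal columns, $D$ diagonal nonnegative), $\bar D=D/\|D\|_2$, and $d_e=\|D\|_F^2/\|D\|_2^2$. $W\in\mathbb{R}^{n\times n}$ is the normalized (orthonormal) Walsh–Hadamard matrix, whose entries all have magnitude $n^{-1/2}$. *)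

theory Defs
  imports "Jordan_Normal_Form.Matrix" "HOL-Probability.Probability_Mass_Function"
begin

definition vnorm :: "real Matrix.vec \<Rightarrow> real" where
  "vnorm v = sqrt (v \<bullet> v)"

definition op_norm :: "real Matrix.mat \<Rightarrow> real" where
  "op_norm M = Sup {vnorm (M *\<^sub>v x) | x. x \<in> carrier_vec (dim_col M) \<and> vnorm x \<le> 1}"

definition frob_norm :: "real Matrix.mat \<Rightarrow> real" where
  "frob_norm M = sqrt (\<Sum>i<dim_row M. \<Sum>j<dim_col M. (M $$ (i,j))^2)"

definition psd_mat :: "nat \<Rightarrow> real Matrix.mat \<Rightarrow> bool" where
  "psd_mat k M \<longleftrightarrow> M \<in> carrier_mat k k \<and> transpose_mat M = M \<and>
     (\<forall>x \<in> carrier_vec k. x \<bullet> (M *\<^sub>v x) \<ge> 0)"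

(* M^{-1/2}: the (unique) positive semidefinite square root of the inverse of
   a positive definite k x k matrix M *)
definition inv_sqrt_mat :: "nat \<Rightarrow> real Matrix.mat \<Rightarrow> real Matrix.mat" where
  "inv_sqrt_mat k M = (THE S. psd_mat k S \<and> S * S * M = 1\<^sub>m k)"

(* normalized Walsh--Hadamard (Sylvester) matrix of size n = 2^k:
   W_{ij} = 2^{-k/2} (-1)^{<bits i, bits j>} *)
definition walsh_hadamard :: "nat \<Rightarrow> real Matrix.mat" where
  "walsh_hadamard k = Matrix.mat (2^k) (2^k)
     (\<lambda>(i,j). (-1) ^ card {b. b < k \<and> bit i b \<and> bit j b} / sqrt (2^k))"

(* Rademacher vectors in {-1,1}^n (entries outside 0..<n are fixed to the default) *)
definition rademacher_set :: "nat \<Rightarrow> (nat \<Rightarrow> real) set" where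
  "rademacher_set n = PiE {0..<n} (\<lambda>_. {-1, 1})"

end

theory Submission
  imports Defs
begin


lemma rad_finite: "finite (rademacher_set n)"
  unfolding rademacher_set_def by (simp add: finite_PiE)

lemma rad_card: "card (rademacher_set n) = 2 ^ n"
  unfolding rademacher_set_def by (simp add: card_PiE eval_nat_numeral)

lemma rad_0: "rademacher_set 0 = {\<lambda>_. undefined}"
  unfolding rademacher_set_def by simp

lemma rad_mem: "x \<in> rademacher_set n \<Longrightarrow> i < n \<Longrightarrow> x i = 1 \<or> x i = -1"
  unfolding rademacher_set_def by (auto simp: PiE_iff)

lemma rad_upd: "x \<in> rademacher_set n \<Longrightarrow> i < n \<Longrightarrow> s \<in> {-1,1} \<Longrightarrow> x(i:=s) \<in> rademacher_set n"
  unfolding rademacher_set_def by (auto simp: PiE_iff extensional_def)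

lemma sum_rad_Suc:
  fixes \<phi> :: "(nat \<Rightarrow> real) \<Rightarrow> real"
  shows "(\<Sum>y\<in>rademacher_set (Suc n). \<phi> y) =
         (\<Sum>x\<in>rademacher_set n. \<phi> (x(n:=1)) + \<phi> (x(n:=-1)))"
proof -
  have eq: "rademacher_set (Suc n) = (\<lambda>(y, g). g(n := y)) ` ({-1,1} \<times> rademacher_set n)"
    unfolding rademacher_set_def
    by (simp add: atLeast0_lessThan_Suc PiE_insert_eq)
  have inj: "inj_on (\<lambda>(y, g). g(n := y)) ({-1,1} \<times> rademacher_set n)"
    unfolding rademacher_set_def
    using inj_combinator[of n "{0..<n}" "\<lambda>_. {-1,1::real}"] by simp
  have "(\<Sum>y\<in>rademacher_set (Suc n). \<phi> y) = (\<Sum>p\<in>{-1,1} \<times> rademacher_set n. \<phi> ((\<lambda>(y, g). g(n := y)) p))"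
    unfolding eq by (rule sum.reindex[OF inj, unfolded comp_def])
  also have "\<dots> = (\<Sum>y\<in>{-1,1}. \<Sum>x\<in>rademacher_set n. \<phi> (x(n:=y)))"
    by (simp add: sum.cartesian_product split_beta)
  also have "\<dots> = (\<Sum>x\<in>rademacher_set n. \<phi> (x(n:=-1))) + (\<Sum>x\<in>rademacher_set n. \<phi> (x(n:=1)))"
    by simp
  also have "\<dots> = (\<Sum>x\<in>rademacher_set n. \<phi> (x(n:=1)) + \<phi> (x(n:=-1)))"
    by (simp add: sum.distrib)
  finally show ?thesis .
qed


definition flip :: "nat \<Rightarrow> (nat \<Rightarrow> real) \<Rightarrow> (nat \<Rightarrow> real)" where
  "flip i x = x(i := - x i)"

lemma flip_flip: "flip i (flip i x) = x"
  unfolding flip_def by auto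

lemma flip_mem: "x \<in> rademacher_set n \<Longrightarrow> i < n \<Longrightarrow> flip i x \<in> rademacher_set n"
  unfolding flip_def using rad_mem[of x n i] rad_upd[of x n i] by auto

lemma sum_flip:
  fixes \<phi> :: "(nat \<Rightarrow> real) \<Rightarrow> real"
  assumes "i < n"
  shows "(\<Sum>x\<in>rademacher_set n. \<phi> (flip i x)) = (\<Sum>x\<in>rademacher_set n. \<phi> x)"
proof -
  have b: "bij_betw (flip i) (rademacher_set n) (rademacher_set n)"
    by (rule bij_betw_byWitness[where f'="flip i"]) (auto simp: flip_flip flip_mem assms)
  show ?thesis using sum.reindex_bij_betw[OF b, of \<phi>] by simp
qed

lemma sum_pair:
  fixes \<phi> :: "(nat \<Rightarrow> real) \<Rightarrow> real"
  assumes "i < n"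
  shows "(\<Sum>x\<in>rademacher_set n. \<phi> (x(i:=1)) + \<phi> (x(i:=-1))) = 2 * (\<Sum>x\<in>rademacher_set n. \<phi> x)"
proof -
  have "(\<Sum>x\<in>rademacher_set n. \<phi> (x(i:=1)) + \<phi> (x(i:=-1))) =
        (\<Sum>x\<in>rademacher_set n. \<phi> x + \<phi> (flip i x))"
  proof (rule sum.cong[OF refl])
    fix x assume x: "x \<in> rademacher_set n"
    show "\<phi> (x(i:=1)) + \<phi> (x(i:=-1)) = \<phi> x + \<phi> (flip i x)"
    proof -
      have "x i = 1 \<or> x i = -1" using rad_mem[OF x assms] .
      then show ?thesis
      proof
        assume h: "x i = 1"
        then have "x(i:=1) = x" by auto
        moreover have "flip i x = x(i:=-1)" using h by (simp add: flip_def)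
        ultimately show ?thesis by simp
      next
        assume h: "x i = -1"
        then have "x(i:=-1) = x" by auto
        moreover have "flip i x = x(i:=1)" using h by (simp add: flip_def)
        ultimately show ?thesis by simp
      qed
    qed
  qed
  also have "\<dots> = 2 * (\<Sum>x\<in>rademacher_set n. \<phi> x)"
    using sum_flip[OF assms, of \<phi>] by (simp add: sum.distrib)
  finally show ?thesis .
qed

lemma sum_eps:
  assumes "i < n" "l < n"
  shows "(\<Sum>x\<in>rademacher_set n. x i * x l) = (if i = l then 2 ^ n else 0)"
proof (cases "i = l")
  case True
  have "(\<Sum>x\<in>rademacher_set n. x i * x l) = (\<Sum>x\<in>rademacher_set n. 1)"
  proof (rule sum.cong[OF refl])
    fix x assume "x \<in> rademacher_set n"
    then have "x l = 1 \<or> x l = -1" using rad_mem assms by blast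
    then show "x i * x l = 1" using True by auto
  qed
  then show ?thesis using True rad_card by simp
next
  case False
  have "(\<Sum>x\<in>rademacher_set n. x i * x l) = (\<Sum>x\<in>rademacher_set n. flip i x i * flip i x l)"
    using sum_flip[OF assms(1), of "\<lambda>x. x i * x l"] by simp
  also have "\<dots> = - (\<Sum>x\<in>rademacher_set n. x i * x l)"
    using False by (simp add: flip_def sum_negf[symmetric])
  finally show ?thesis using False by simp
qed



definition Tf :: "real \<Rightarrow> real \<Rightarrow> real" where
  "Tf h u = h * ln h - h * ln u - h + u"

lemma ln_ge_1_minus_inv: "x > 0 \<Longrightarrow> 1 - 1 / x \<le> ln (x::real)"
proof -
  assume x: "x > 0"
  have "ln (1/x) \<le> 1/x - 1" using x by (intro ln_le_minus_one) auto
  then show ?thesis using x by (simp add: ln_div)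
qed

lemma log_sum2:
  fixes a b c e :: real
  assumes "a > 0" "b > 0" "c > 0" "e > 0"
  shows "(a + b) * ln ((a + b) / (c + e)) \<le> a * ln (a / c) + b * ln (b / e)"
proof -
  define S where "S = a + b"
  define T where "T = c + e"
  have S: "S > 0" and T: "T > 0" using assms by (auto simp: S_def T_def)
  have 1: "a * ln (a / c) - a * ln (S / T) = a * ln ((a * T) / (c * S))"
    using assms S T by (simp add: ln_div ln_mult algebra_simps)
  have 2: "b * ln (b / e) - b * ln (S / T) = b * ln ((b * T) / (e * S))"
    using assms S T by (simp add: ln_div ln_mult algebra_simps)
  have 3: "a * ln ((a * T) / (c * S)) \<ge> a * (1 - (c * S) / (a * T))"
    using assms S T ln_ge_1_minus_inv[of "(a * T) / (c * S)"]
    by (intro mult_left_mono) auto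
  have 4: "b * ln ((b * T) / (e * S)) \<ge> b * (1 - (e * S) / (b * T))"
    using assms S T ln_ge_1_minus_inv[of "(b * T) / (e * S)"]
    by (intro mult_left_mono) auto
  have 51: "a * (1 - (c * S) / (a * T)) = a - c * S / T" using assms S T by (simp add: field_simps)
  have 52: "b * (1 - (e * S) / (b * T)) = b - e * S / T" using assms S T by (simp add: field_simps)
  have 53: "c * S / T + e * S / T = S" using T unfolding T_def by (simp add: field_simps add_divide_distrib[symmetric])
  have 5: "a * (1 - (c * S) / (a * T)) + b * (1 - (e * S) / (b * T)) = 0"
    using 51 52 53 by (simp add: S_def)
  have 6: "S * ln (S / T) = a * ln (S / T) + b * ln (S / T)" by (simp add: S_def algebra_simps)
  show ?thesis unfolding S_def[symmetric] T_def[symmetric] using 1 2 3 4 5 6 by linarith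
qed

lemma Tf_alt: "h > 0 \<Longrightarrow> u > 0 \<Longrightarrow> Tf h u = h * ln (h / u) - h + u"
  by (simp add: Tf_def ln_div algebra_simps)

lemma Tf_convex:
  fixes a b c e :: real
  assumes "a > 0" "b > 0" "c > 0" "e > 0"
  shows "2 * Tf ((a + b) / 2) ((c + e) / 2) \<le> Tf a c + Tf b e"
proof -
  have r: "((a + b) / 2) / ((c + e) / 2) = (a + b) / (c + e)" using assms by (simp add: field_simps)
  have pq: "(a + b) / 2 > 0" "(c + e) / 2 > 0" using assms by auto
  have g: "\<And>L::real. 2 * (((a + b) / 2) * L - (a + b) / 2 + (c + e) / 2) = (a + b) * L - (a + b) + (c + e)"
    by (simp add: field_simps)
  have "2 * Tf ((a + b) / 2) ((c + e) / 2) = (a + b) * ln ((a + b) / (c + e)) - (a + b) + (c + e)"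
    unfolding Tf_alt[OF pq] r by (rule g)
  also have "\<dots> \<le> a * ln (a / c) + b * ln (b / e) - (a + b) + (c + e)"
    using log_sum2[OF assms] by simp
  also have "\<dots> = Tf a c + Tf b e" using assms by (simp add: Tf_alt)
  finally show ?thesis .
qed

lemma Tf_onedim:
  fixes a b w :: real
  assumes "a > 0" "b > 0" "w > 0"
  shows "a * ln a + b * ln b - (a + b) * ln ((a + b) / 2) \<le> Tf a w + Tf b w"
proof -
  define m where "m = (a + b) / 2"
  have m: "m > 0" using assms by (simp add: m_def)
  have "ln (w / m) \<le> w / m - 1" using m assms by (intro ln_le_minus_one) auto
  then have "m * ln (w / m) \<le> w - m" using m by (simp add: field_simps)
  then have "m * (ln w - ln m) \<le> w - m" using m assms by (simp add: ln_div)
  then have k0: "(2 * m) * ln w - (2 * m) * ln m \<le> 2 * w - 2 * m" by (simp add: algebra_simps)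
  have ab: "a + b = 2 * m" by (simp add: m_def)
  have k: "(a + b) * ln w - (a + b) * ln m \<le> 2 * w - (a + b)" unfolding ab using k0 .
  have "a * ln a + b * ln b - (a + b) * ln m \<le> Tf a w + Tf b w"
    unfolding Tf_def using k by (simp add: algebra_simps)
  then show ?thesis unfolding m_def .
qed



lemma tensor:
  fixes n :: nat
  shows "\<And>(h :: (nat \<Rightarrow> real) \<Rightarrow> real) (u :: nat \<Rightarrow> (nat \<Rightarrow> real) \<Rightarrow> real).
    (\<And>x. h x > 0) \<Longrightarrow> (\<And>i x. u i x > 0) \<Longrightarrow> (\<And>i x s. i < n \<Longrightarrow> u i (x(i:=s)) = u i x) \<Longrightarrow>
    (\<Sum>x\<in>rademacher_set n. h x * ln (h x)) - (\<Sum>x\<in>rademacher_set n. h x) * ln ((\<Sum>x\<in>rademacher_set n. h x) / 2^n)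
    \<le> (\<Sum>i<n. \<Sum>x\<in>rademacher_set n. Tf (h x) (u i x))"
proof (induction n)
  case 0
  then show ?case by (simp add: rad_0)
next
  case (Suc n h u)
  note hpos = Suc.prems(1) and upos = Suc.prems(2) and uind = Suc.prems(3)
  define hp where "hp x = h (x(n:=1))" for x
  define hm where "hm x = h (x(n:=-1))" for x
  define hb where "hb x = (hp x + hm x) / 2" for x
  define ub where "ub i x = (u i (x(n:=1)) + u i (x(n:=-1))) / 2" for i x
  let ?O = "rademacher_set n"
  have hbpos: "\<And>x. hb x > 0" using hpos by (simp add: hb_def hp_def hm_def add_pos_pos)
  have ubpos: "\<And>i x. ub i x > 0" using upos by (simp add: ub_def add_pos_pos)
  have ubind: "\<And>i x s. i < n \<Longrightarrow> ub i (x(i:=s)) = ub i x"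
  proof -
    fix i x s assume i: "i < n"
    then have ne: "i \<noteq> n" by simp
    have "u i (x(i:=s, n:=1)) = u i (x(n:=1))"
      unfolding fun_upd_twist[OF ne, of x s 1] using i by (intro uind) simp
    moreover have "u i (x(i:=s, n:=-1)) = u i (x(n:=-1))"
      unfolding fun_upd_twist[OF ne, of x s "-1"] using i by (intro uind) simp
    ultimately show "ub i (x(i:=s)) = ub i x" by (simp add: ub_def)
  qed
  have IH: "(\<Sum>x\<in>?O. hb x * ln (hb x)) - (\<Sum>x\<in>?O. hb x) * ln ((\<Sum>x\<in>?O. hb x) / 2^n)
    \<le> (\<Sum>i<n. \<Sum>x\<in>?O. Tf (hb x) (ub i x))"
    by (rule Suc.IH[OF hbpos ubpos ubind])
  define Sb where "Sb = (\<Sum>x\<in>?O. hb x)"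
  have S1: "(\<Sum>y\<in>rademacher_set (Suc n). h y) = 2 * Sb"
    unfolding sum_rad_Suc Sb_def hb_def hp_def hm_def by (simp add: sum_divide_distrib[symmetric])
  have S2: "(\<Sum>y\<in>rademacher_set (Suc n). h y * ln (h y)) = (\<Sum>x\<in>?O. hp x * ln (hp x) + hm x * ln (hm x))"
    unfolding sum_rad_Suc hp_def hm_def by simp
  have S3: "2 * Sb / 2 ^ Suc n = Sb / 2 ^ n" by simp
  have A: "\<And>x. hp x * ln (hp x) + hm x * ln (hm x) - (hp x + hm x) * ln ((hp x + hm x) / 2)
      \<le> Tf (hp x) (u n (x(n:=1))) + Tf (hm x) (u n (x(n:=-1)))"
  proof -
    fix x
    have e1: "u n (x(n:=-1)) = u n x" by (rule uind) simp
    have e2: "u n (x(n:=1)) = u n x" by (rule uind) simp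
    have e: "u n (x(n:=-1)) = u n (x(n:=1))" using e1 e2 by simp
    show "hp x * ln (hp x) + hm x * ln (hm x) - (hp x + hm x) * ln ((hp x + hm x) / 2)
      \<le> Tf (hp x) (u n (x(n:=1))) + Tf (hm x) (u n (x(n:=-1)))"
      unfolding e by (rule Tf_onedim) (use hpos upos in \<open>auto simp: hp_def hm_def\<close>)
  qed
  have B: "\<And>i x. 2 * Tf (hb x) (ub i x) \<le> Tf (hp x) (u i (x(n:=1))) + Tf (hm x) (u i (x(n:=-1)))"
    unfolding hb_def ub_def by (rule Tf_convex) (use hpos upos in \<open>auto simp: hp_def hm_def\<close>)
  have hbln: "\<And>x. (hp x + hm x) * ln ((hp x + hm x) / 2) = 2 * (hb x * ln (hb x))"
    by (simp add: hb_def)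
  have LHS: "(\<Sum>y\<in>rademacher_set (Suc n). h y * ln (h y)) - (\<Sum>y\<in>rademacher_set (Suc n). h y) * ln ((\<Sum>y\<in>rademacher_set (Suc n). h y) / 2 ^ Suc n)
     = (\<Sum>x\<in>?O. hp x * ln (hp x) + hm x * ln (hm x) - (hp x + hm x) * ln ((hp x + hm x) / 2))
       + 2 * ((\<Sum>x\<in>?O. hb x * ln (hb x)) - Sb * ln (Sb / 2^n))"
    unfolding S1 S2 S3 hbln by (simp add: sum_subtractf sum_distrib_left algebra_simps)
  also have "\<dots> \<le> (\<Sum>x\<in>?O. Tf (hp x) (u n (x(n:=1))) + Tf (hm x) (u n (x(n:=-1))))
       + 2 * (\<Sum>i<n. \<Sum>x\<in>?O. Tf (hb x) (ub i x))"
  proof -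
    have "(\<Sum>x\<in>?O. hp x * ln (hp x) + hm x * ln (hm x) - (hp x + hm x) * ln ((hp x + hm x) / 2))
       \<le> (\<Sum>x\<in>?O. Tf (hp x) (u n (x(n:=1))) + Tf (hm x) (u n (x(n:=-1))))"
      by (rule sum_mono) (rule A)
    moreover have "2 * ((\<Sum>x\<in>?O. hb x * ln (hb x)) - Sb * ln (Sb / 2^n)) \<le> 2 * (\<Sum>i<n. \<Sum>x\<in>?O. Tf (hb x) (ub i x))"
      using IH unfolding Sb_def by simp
    ultimately show ?thesis by (rule add_mono)
  qed
  also have "\<dots> \<le> (\<Sum>x\<in>?O. Tf (hp x) (u n (x(n:=1))) + Tf (hm x) (u n (x(n:=-1))))
       + (\<Sum>i<n. \<Sum>x\<in>?O. Tf (hp x) (u i (x(n:=1))) + Tf (hm x) (u i (x(n:=-1))))"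
  proof -
    have "2 * (\<Sum>i<n. \<Sum>x\<in>?O. Tf (hb x) (ub i x)) = (\<Sum>i<n. \<Sum>x\<in>?O. 2 * Tf (hb x) (ub i x))"
      by (simp add: sum_distrib_left)
    also have "\<dots> \<le> (\<Sum>i<n. \<Sum>x\<in>?O. Tf (hp x) (u i (x(n:=1))) + Tf (hm x) (u i (x(n:=-1))))"
      by (intro sum_mono B)
    finally show ?thesis by linarith
  qed
  also have "\<dots> = (\<Sum>i<Suc n. \<Sum>y\<in>rademacher_set (Suc n). Tf (h y) (u i y))"
    unfolding sum_rad_Suc hp_def hm_def by simp
  finally show ?case .
qed



lemma exp_neg_le: fixes w :: real assumes "w \<ge> 0" shows "exp (- w) \<le> 1 - w + w^2 / 2"
proof -
  let ?g = "\<lambda>w::real. 1 - w + w^2 / 2 - exp (- w)"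
  have "?g 0 \<le> ?g w"
  proof (rule DERIV_nonneg_imp_nondecreasing[OF assms])
    fix x :: real assume "0 \<le> x" "x \<le> w"
    have d: "(?g has_real_derivative (- 1 + x + exp (- x))) (at x)"
      by (auto intro!: derivative_eq_intros simp: power2_eq_square)
    have "1 + (- x) \<le> exp (- x)" by (rule exp_ge_add_one_self)
    then show "\<exists>y. (?g has_real_derivative y) (at x) \<and> 0 \<le> y" using d by (intro exI[of _ "- 1 + x + exp (- x)"]) auto
  qed
  then show ?thesis by simp
qed

definition gmin :: "((nat \<Rightarrow> real) \<Rightarrow> real) \<Rightarrow> nat \<Rightarrow> (nat \<Rightarrow> real) \<Rightarrow> real" where
  "gmin f i x = min (f (x(i:=1))) (f (x(i:=-1)))"

lemma gmin_le: "x \<in> rademacher_set n \<Longrightarrow> i < n \<Longrightarrow> gmin f i x \<le> f x"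
  unfolding gmin_def using rad_mem[of x n i]
  by (metis fun_upd_triv min.cobounded1 min.cobounded2)

lemma mls:
  fixes f :: "(nat \<Rightarrow> real) \<Rightarrow> real" and v l :: real
  assumes l: "l \<ge> 0"
    and grad: "\<And>x. x \<in> rademacher_set n \<Longrightarrow> (\<Sum>i<n. (f x - gmin f i x)^2) \<le> v"
  shows "(\<Sum>x\<in>rademacher_set n. exp (l * f x) * (l * f x))
     - (\<Sum>x\<in>rademacher_set n. exp (l * f x)) * ln ((\<Sum>x\<in>rademacher_set n. exp (l * f x)) / 2^n)
     \<le> l^2 * v / 2 * (\<Sum>x\<in>rademacher_set n. exp (l * f x))"
proof -
  let ?O = "rademacher_set n"
  have T: "(\<Sum>x\<in>?O. exp (l * f x) * ln (exp (l * f x))) - (\<Sum>x\<in>?O. exp (l * f x)) * ln ((\<Sum>x\<in>?O. exp (l * f x)) / 2^n)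
    \<le> (\<Sum>i<n. \<Sum>x\<in>?O. Tf (exp (l * f x)) (exp (l * gmin f i x)))"
    by (rule tensor) (auto simp: gmin_def)
  have pt: "Tf (exp (l * f x)) (exp (l * gmin f i x)) \<le> exp (l * f x) * (l^2 / 2 * (f x - gmin f i x)^2)"
    if x: "x \<in> ?O" and i: "i < n" for x i
  proof -
    define w where "w = l * (f x - gmin f i x)"
    have w: "w \<ge> 0" unfolding w_def using gmin_le[OF x i, of f] l by simp
    have e: "exp (l * gmin f i x) = exp (l * f x) * exp (- w)"
    proof -
      have "exp (l * f x) * exp (- w) = exp (l * f x + - w)" by (rule mult_exp_exp)
      moreover have "l * f x + - w = l * gmin f i x" by (simp add: w_def algebra_simps)
      ultimately show ?thesis by simp
    qed
    have "Tf (exp (l * f x)) (exp (l * gmin f i x)) = exp (l * f x) * (w - 1 + exp (- w))"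
    proof -
      have t1: "Tf (exp (l * f x)) (exp (l * gmin f i x)) = exp (l * f x) * (l * f x) - exp (l * f x) * (l * gmin f i x) - exp (l * f x) + exp (l * gmin f i x)"
        by (simp add: Tf_def)
      have t2: "l * gmin f i x = l * f x - w" by (simp add: w_def algebra_simps)
      show ?thesis unfolding t1 unfolding e unfolding t2 by (simp add: algebra_simps)
    qed
    also have "\<dots> \<le> exp (l * f x) * (w^2 / 2)"
      using exp_neg_le[OF w] by (intro mult_left_mono) auto
    also have "\<dots> = exp (l * f x) * (l^2 / 2 * (f x - gmin f i x)^2)"
      by (simp add: w_def power_mult_distrib)
    finally show ?thesis .
  qed
  have "(\<Sum>i<n. \<Sum>x\<in>?O. Tf (exp (l * f x)) (exp (l * gmin f i x)))
     = (\<Sum>x\<in>?O. \<Sum>i<n. Tf (exp (l * f x)) (exp (l * gmin f i x)))"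
    by (rule sum.swap)
  also have "\<dots> \<le> (\<Sum>x\<in>?O. \<Sum>i<n. exp (l * f x) * (l^2 / 2 * (f x - gmin f i x)^2))"
    by (intro sum_mono pt) auto
  also have "\<dots> = (\<Sum>x\<in>?O. exp (l * f x) * (l^2 / 2 * (\<Sum>i<n. (f x - gmin f i x)^2)))"
    by (simp add: sum_distrib_left)
  also have "\<dots> \<le> (\<Sum>x\<in>?O. exp (l * f x) * (l^2 / 2 * v))"
    by (intro sum_mono mult_left_mono grad) auto
  also have "\<dots> = l^2 * v / 2 * (\<Sum>x\<in>?O. exp (l * f x))"
    by (simp add: sum_distrib_left sum_distrib_right algebra_simps)
  finally show ?thesis using T by simp
qed



lemma herbst:
  fixes f :: "(nat \<Rightarrow> real) \<Rightarrow> real" and v l0 :: real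
  assumes mlsH: "\<And>l. l \<ge> 0 \<Longrightarrow> (\<Sum>x\<in>rademacher_set n. exp (l * f x) * (l * f x))
     - (\<Sum>x\<in>rademacher_set n. exp (l * f x)) * ln ((\<Sum>x\<in>rademacher_set n. exp (l * f x)) / 2^n)
     \<le> l^2 * v / 2 * (\<Sum>x\<in>rademacher_set n. exp (l * f x))"
    and l0: "l0 > 0"
  shows "ln ((\<Sum>x\<in>rademacher_set n. exp (l0 * f x)) / 2^n)
     \<le> l0 * ((\<Sum>x\<in>rademacher_set n. f x) / 2^n) + v / 2 * l0^2"
proof -
  let ?O = "rademacher_set n"
  define N :: real where "N = 2^n"
  define Z where "Z l = (\<Sum>x\<in>?O. exp (l * f x))" for l
  define Z' where "Z' l = (\<Sum>x\<in>?O. f x * exp (l * f x))" for l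
  define m where "m = (\<Sum>x\<in>?O. f x) / N"
  define K where "K l = ln (Z l / N) - l * m - v / 2 * l^2" for l
  define Q where "Q l = K l / l" for l
  have N: "N > 0" by (simp add: N_def)
  have ne: "?O \<noteq> {}" using rad_card[of n] by (metis card.empty power_not_zero zero_neq_numeral)
  have Zpos: "Z l > 0" for l
    unfolding Z_def by (rule sum_pos[OF rad_finite ne]) auto
  have Z0: "Z 0 = N" by (simp add: Z_def N_def rad_card)
  have Z'0: "Z' 0 = N * m" using N by (simp add: Z'_def m_def)
  have dZ: "(Z has_real_derivative Z' l) (at l)" for l
    unfolding Z_def Z'_def by (auto intro!: derivative_eq_intros DERIV_sum simp: algebra_simps)
  have dK: "(K has_real_derivative (Z' l / Z l - m - v * l)) (at l)" for l
  proof -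
    have d: "((\<lambda>l. ln (Z l / N) - l * m - v / 2 * l^2) has_real_derivative
        (Z' l / N) / (Z l / N) - 1 * m - v / 2 * (2 * l)) (at l)"
      using Zpos[of l] N
      by (auto intro!: derivative_eq_intros dZ simp: power2_eq_square)
    have e: "(Z' l / N) / (Z l / N) - 1 * m - v / 2 * (2 * l) = Z' l / Z l - m - v * l"
      using N Zpos[of l] by (simp add: field_simps)
    show ?thesis unfolding K_def[abs_def] using d unfolding e .
  qed
  have K0: "K 0 = 0" by (simp add: K_def Z0 N)
  have dK0: "Z' 0 / Z 0 - m - v * 0 = 0" using N by (simp add: Z0 Z'0)
  have lim: "(Q \<longlongrightarrow> 0) (at_right 0)"
  proof -
    have "((\<lambda>y. (K y - K 0) / (y - 0)) \<longlongrightarrow> 0) (at 0)"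
      using dK[of 0] unfolding has_field_derivative_iff dK0 .
    then have "(Q \<longlongrightarrow> 0) (at 0)" by (simp add: K0 Q_def[abs_def])
    then show ?thesis by (simp add: filterlim_at_split)
  qed
  have key: "l * (Z' l / Z l - m - v * l) - K l \<le> 0" if l: "l > 0" for l
  proof -
    have ent: "(\<Sum>x\<in>?O. exp (l * f x) * (l * f x)) = l * Z' l"
      unfolding Z'_def by (simp add: sum_distrib_left algebra_simps)
    have "l * Z' l - Z l * ln (Z l / N) \<le> l^2 * v / 2 * Z l"
      using mlsH[of l] l unfolding ent by (simp add: Z_def N_def)
    then have "(l * Z' l - Z l * ln (Z l / N)) / Z l \<le> (l^2 * v / 2 * Z l) / Z l"
      using Zpos[of l] by (intro divide_right_mono) auto
    moreover have "(l * Z' l - Z l * ln (Z l / N)) / Z l = l * (Z' l / Z l) - ln (Z l / N)"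
      using Zpos[of l] by (simp add: diff_divide_distrib)
    moreover have "(l^2 * v / 2 * Z l) / Z l = l^2 * v / 2" using Zpos[of l] by simp
    ultimately have "l * (Z' l / Z l) - ln (Z l / N) \<le> l^2 * v / 2" by simp
    moreover have "\<And>A B. l * (A - m - v * l) - (B - l * m - v / 2 * l^2) = (l * A - B) - l^2 * v / 2"
      by (simp add: field_simps power2_eq_square)
    ultimately show ?thesis unfolding K_def by (metis diff_le_0_iff_le)
  qed
  have dQ: "(Q has_real_derivative ((Z' l / Z l - m - v * l) * l - K l) / l^2) (at l)" if l: "l > 0" for l
  proof -
    have "((\<lambda>l. K l / l) has_real_derivative ((Z' l / Z l - m - v * l) * l - K l * 1) / (l * l)) (at l)"
      using l by (intro DERIV_divide dK DERIV_ident) auto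
    then show ?thesis unfolding Q_def[abs_def] by (simp add: power2_eq_square)
  qed
  have mono: "Q l0 \<le> Q \<mu>" if mu: "0 < \<mu>" "\<mu> \<le> l0" for \<mu>
  proof (rule DERIV_nonpos_imp_nonincreasing[OF mu(2)])
    fix x assume x: "\<mu> \<le> x" "x \<le> l0"
    then have xp: "x > 0" using mu by simp
    have "((Z' x / Z x - m - v * x) * x - K x) / x^2 \<le> 0"
      using key[OF xp] by (intro divide_nonpos_nonneg) (auto simp: algebra_simps)
    then show "\<exists>y. DERIV Q x :> y \<and> y \<le> 0" using dQ[OF xp] by blast
  qed
  have "Q l0 \<le> 0"
  proof (rule tendsto_lowerbound[OF lim])
    show "\<forall>\<^sub>F i in at_right 0. Q l0 \<le> Q i"
      unfolding eventually_at_right_field using l0 mono by (intro exI[of _ l0]) auto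
  qed simp
  then have "K l0 \<le> 0" using l0 by (simp add: Q_def divide_le_0_iff)
  then show ?thesis unfolding K_def Z_def m_def N_def by (simp add: algebra_simps)
qed

lemma chernoff:
  fixes f :: "(nat \<Rightarrow> real) \<Rightarrow> real" and v t :: real
  assumes v: "v > 0" and t: "t > 0"
    and grad: "\<And>x. x \<in> rademacher_set n \<Longrightarrow> (\<Sum>i<n. (f x - gmin f i x)^2) \<le> v"
  shows "real (card {x\<in>rademacher_set n. f x \<ge> (\<Sum>x\<in>rademacher_set n. f x) / 2^n + t})
     \<le> 2^n * exp (- (t^2) / (2 * v))"
proof -
  let ?O = "rademacher_set n"
  define m where "m = (\<Sum>x\<in>?O. f x) / 2^n"
  define l where "l = t / v"
  have l: "l > 0" using v t by (simp add: l_def)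
  have H: "ln ((\<Sum>x\<in>?O. exp (l * f x)) / 2^n) \<le> l * m + v / 2 * l^2"
    unfolding m_def by (rule herbst[OF mls l]) (use grad in auto)
  have ne: "?O \<noteq> {}" using rad_card[of n] by (metis card.empty power_not_zero zero_neq_numeral)
  have Zpos: "(\<Sum>x\<in>?O. exp (l * f x)) / 2^n > 0"
    by (intro divide_pos_pos sum_pos[OF rad_finite ne]) auto
  have Zb: "(\<Sum>x\<in>?O. exp (l * f x)) \<le> 2^n * exp (l * m + v / 2 * l^2)"
  proof -
    have "(\<Sum>x\<in>?O. exp (l * f x)) / 2^n \<le> exp (l * m + v / 2 * l^2)"
      using H Zpos by (metis exp_le_cancel_iff exp_ln)
    then show ?thesis by (simp add: field_simps)
  qed
  let ?S = "{x\<in>?O. f x \<ge> m + t}"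
  have "real (card ?S) = (\<Sum>x\<in>?S. 1)" by simp
  also have "\<dots> \<le> (\<Sum>x\<in>?S. exp (l * (f x - m - t)))"
    using l by (intro sum_mono) (auto intro!: mult_nonneg_nonneg)
  also have "\<dots> \<le> (\<Sum>x\<in>?O. exp (l * (f x - m - t)))"
    by (intro sum_mono2 rad_finite) auto
  also have "\<dots> = (\<Sum>x\<in>?O. exp (l * f x)) * exp (- l * (m + t))"
    by (simp add: sum_distrib_right mult_exp_exp algebra_simps)
  also have "\<dots> \<le> 2^n * exp (l * m + v / 2 * l^2) * exp (- l * (m + t))"
    using Zb by (intro mult_right_mono) auto
  also have "\<dots> = 2^n * exp (v / 2 * l^2 - l * t)"
    by (simp add: mult.assoc mult_exp_exp algebra_simps)
  also have "v / 2 * l^2 - l * t = - (t^2) / (2 * v)"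
    using v by (simp add: l_def field_simps power2_eq_square)
  finally show ?thesis unfolding m_def .
qed



lemma cs_sum:
  fixes R S :: "'a \<Rightarrow> real"
  shows "(\<Sum>l\<in>A. R l * S l) \<le> sqrt (\<Sum>l\<in>A. (R l)^2) * sqrt (\<Sum>l\<in>A. (S l)^2)"
proof -
  have "(\<Sum>l\<in>A. R l * S l) \<le> (\<Sum>l\<in>A. \<bar>R l\<bar> * \<bar>S l\<bar>)"
    by (intro sum_mono) (simp add: abs_mult[symmetric])
  also have "\<dots> \<le> L2_set R A * L2_set S A" by (rule L2_set_mult_ineq)
  finally show ?thesis by (simp add: L2_set_def)
qed

definition Fa :: "nat \<Rightarrow> nat \<Rightarrow> (nat \<Rightarrow> nat \<Rightarrow> real) \<Rightarrow> (nat \<Rightarrow> real) \<Rightarrow> real" where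
  "Fa n d a x = sqrt (\<Sum>l<d. (\<Sum>i<n. x i * a i l)^2)"

lemma grad_bound:
  fixes a :: "nat \<Rightarrow> nat \<Rightarrow> real" and B :: real
  assumes B: "B \<ge> 0" and ortho: "\<And>r. (\<Sum>i<n. (\<Sum>l<d. r l * a i l)^2) \<le> B * (\<Sum>l<d. (r l)^2)"
    and x: "x \<in> rademacher_set n"
  shows "(\<Sum>i<n. (Fa n d a x - gmin (Fa n d a) i x)^2) \<le> 4 * B"
proof -
  define F where "F = Fa n d a"
  define R where "R l = (\<Sum>i<n. x i * a i l)" for l
  define \<phi> where "\<phi> = F x"
  have phi: "\<phi> = sqrt (\<Sum>l<d. (R l)^2)" by (simp add: \<phi>_def F_def Fa_def R_def)
  have phi0: "\<phi> \<ge> 0" by (simp add: phi sum_nonneg)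
  have phi2: "\<phi>^2 = (\<Sum>l<d. (R l)^2)" by (simp add: phi sum_nonneg)
  have Fnn: "F y \<ge> 0" for y by (simp add: F_def Fa_def sum_nonneg)
  have step: "\<phi> * (\<phi> - F (x(i:=s))) \<le> 2 * \<bar>\<Sum>l<d. R l * a i l\<bar>"
    if i: "i < n" and s: "s = 1 \<or> s = -1" for i s
  proof -
    define c where "c = s - x i"
    have c: "\<bar>c\<bar> \<le> 2" using rad_mem[OF x i] s by (auto simp: c_def)
    have ry: "(\<Sum>i'<n. (x(i:=s)) i' * a i' l) = R l + c * a i l" for l
    proof -
      have "(\<Sum>i'<n. (x(i:=s)) i' * a i' l) = (\<Sum>i'<n. x i' * a i' l + (if i' = i then c * a i l else 0))"
        by (intro sum.cong) (auto simp: c_def algebra_simps)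
      also have "\<dots> = R l + c * a i l" using i by (simp add: sum.distrib R_def)
      finally show ?thesis .
    qed
    have Fy: "F (x(i:=s)) = sqrt (\<Sum>l<d. (R l + c * a i l)^2)"
      unfolding F_def Fa_def ry[symmetric] ..
    have "(\<Sum>l<d. R l * (R l + c * a i l)) \<le> \<phi> * F (x(i:=s))"
      unfolding phi Fy by (rule cs_sum)
    moreover have "(\<Sum>l<d. R l * (R l + c * a i l)) = \<phi>^2 + c * (\<Sum>l<d. R l * a i l)"
      unfolding phi2 by (simp add: algebra_simps sum.distrib sum_distrib_left power2_eq_square)
    moreover have "- (c * (\<Sum>l<d. R l * a i l)) \<le> 2 * \<bar>\<Sum>l<d. R l * a i l\<bar>"
    proof -
      have "- (c * (\<Sum>l<d. R l * a i l)) \<le> \<bar>c\<bar> * \<bar>\<Sum>l<d. R l * a i l\<bar>"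
        by (metis abs_ge_minus_self abs_mult)
      also have "\<dots> \<le> 2 * \<bar>\<Sum>l<d. R l * a i l\<bar>" using c by (intro mult_right_mono) auto
      finally show ?thesis .
    qed
    ultimately show ?thesis by (simp add: algebra_simps power2_eq_square)
  qed
  have gm: "\<phi> * (\<phi> - gmin F i x) \<le> 2 * \<bar>\<Sum>l<d. R l * a i l\<bar>" if i: "i < n" for i
    using step[OF i, of 1] step[OF i, of "-1"] unfolding gmin_def
    by (cases "F (x(i:=1)) \<le> F (x(i:=-1))") (auto simp: min_def)
  have gle: "gmin F i x \<le> \<phi>" if "i < n" for i using gmin_le[OF x that] by (simp add: \<phi>_def)
  have each: "\<phi>^2 * (\<phi> - gmin F i x)^2 \<le> 4 * (\<Sum>l<d. R l * a i l)^2" if i: "i < n" for i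
  proof -
    have "0 \<le> \<phi> * (\<phi> - gmin F i x)" using phi0 gle[OF i] by simp
    then have "(\<phi> * (\<phi> - gmin F i x))^2 \<le> (2 * \<bar>\<Sum>l<d. R l * a i l\<bar>)^2"
      using gm[OF i] by (intro power_mono) auto
    then show ?thesis by (simp add: power_mult_distrib)
  qed
  show ?thesis
  proof (cases "\<phi> = 0")
    case True
    have "gmin F i x = 0" if "i < n" for i
    proof -
      have "gmin F i x \<ge> 0" unfolding gmin_def using Fnn by simp
      then show ?thesis using gle[OF that] True by simp
    qed
    then have "(\<Sum>i<n. (F x - gmin F i x)^2) = 0" using True by (simp add: \<phi>_def)
    then show ?thesis using B by (simp add: F_def)
  next
    case False
    then have pp: "\<phi>^2 > 0" using phi0 by simp
    have "\<phi>^2 * (\<Sum>i<n. (\<phi> - gmin F i x)^2) = (\<Sum>i<n. \<phi>^2 * (\<phi> - gmin F i x)^2)"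
      by (simp add: sum_distrib_left)
    also have "\<dots> \<le> (\<Sum>i<n. 4 * (\<Sum>l<d. R l * a i l)^2)"
      by (intro sum_mono each) auto
    also have "\<dots> = 4 * (\<Sum>i<n. (\<Sum>l<d. R l * a i l)^2)" by (simp add: sum_distrib_left)
    also have "\<dots> \<le> 4 * (B * \<phi>^2)" unfolding phi2 using ortho[of R] by simp
    also have "\<dots> = \<phi>^2 * (4 * B)" by (simp add: algebra_simps)
    finally have "\<phi>^2 * (\<Sum>i<n. (\<phi> - gmin F i x)^2) \<le> \<phi>^2 * (4 * B)" .
    then have "(\<Sum>i<n. (\<phi> - gmin F i x)^2) \<le> 4 * B"
      using pp by (simp add: mult_le_cancel_left_pos)
    then show ?thesis by (simp add: \<phi>_def F_def)
  qed
qed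

lemma mean_bound:
  fixes a :: "nat \<Rightarrow> nat \<Rightarrow> real"
  shows "(\<Sum>x\<in>rademacher_set n. Fa n d a x) / 2^n \<le> sqrt (\<Sum>l<d. \<Sum>i<n. (a i l)^2)"
proof -
  let ?O = "rademacher_set n"
  define N :: real where "N = 2^n"
  have N: "N > 0" by (simp add: N_def)
  have sq: "(\<Sum>x\<in>?O. (Fa n d a x)^2) = N * (\<Sum>l<d. \<Sum>i<n. (a i l)^2)"
  proof -
    have "(\<Sum>x\<in>?O. (Fa n d a x)^2) = (\<Sum>x\<in>?O. \<Sum>l<d. (\<Sum>i<n. x i * a i l)^2)"
      by (simp add: Fa_def sum_nonneg)
    also have "\<dots> = (\<Sum>x\<in>?O. \<Sum>l<d. \<Sum>i<n. \<Sum>j<n. (x i * x j) * (a i l * a j l))"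
      by (simp add: power2_eq_square sum_product algebra_simps)
    also have "\<dots> = (\<Sum>l<d. \<Sum>i<n. \<Sum>j<n. (\<Sum>x\<in>?O. x i * x j) * (a i l * a j l))"
      by (simp add: sum.swap[of _ ?O] sum_distrib_right)
    also have "\<dots> = (\<Sum>l<d. \<Sum>i<n. \<Sum>j<n. (if i = j then N * (a i l * a j l) else 0))"
      by (intro sum.cong refl) (simp add: sum_eps N_def)
    also have "\<dots> = (\<Sum>l<d. \<Sum>i<n. N * (a i l)^2)"
      by (simp add: power2_eq_square)
    also have "\<dots> = N * (\<Sum>l<d. \<Sum>i<n. (a i l)^2)" by (simp add: sum_distrib_left)
    finally show ?thesis .
  qed
  have "(\<Sum>x\<in>?O. Fa n d a x * 1) \<le> sqrt (\<Sum>x\<in>?O. (Fa n d a x)^2) * sqrt (\<Sum>x\<in>?O. 1^2)"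
    by (rule cs_sum)
  also have "\<dots> = sqrt (N * (\<Sum>l<d. \<Sum>i<n. (a i l)^2)) * sqrt N"
    by (simp add: sq rad_card N_def)
  also have "\<dots> = N * sqrt (\<Sum>l<d. \<Sum>i<n. (a i l)^2)"
    using N by (simp add: real_sqrt_mult algebra_simps)
  finally show ?thesis using N by (simp add: N_def field_simps)
qed



lemma abstract_main:
  fixes a :: "nat \<Rightarrow> nat \<Rightarrow> real" and B t :: real
  assumes B: "B > 0" and t: "t > 0"
    and ortho: "\<And>r. (\<Sum>i<n. (\<Sum>l<d. r l * a i l)^2) \<le> B * (\<Sum>l<d. (r l)^2)"
  shows "real (card {x\<in>rademacher_set n. Fa n d a x \<ge> sqrt (\<Sum>l<d. \<Sum>i<n. (a i l)^2) + t})
     \<le> 2^n * exp (- (t^2) / (8 * B))"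
proof -
  have c: "real (card {x\<in>rademacher_set n. Fa n d a x \<ge> (\<Sum>x\<in>rademacher_set n. Fa n d a x) / 2^n + t})
     \<le> 2^n * exp (- (t^2) / (2 * (4 * B)))"
    by (rule chernoff) (use B t grad_bound[OF _ ortho] in auto)
  have sub: "{x\<in>rademacher_set n. Fa n d a x \<ge> sqrt (\<Sum>l<d. \<Sum>i<n. (a i l)^2) + t}
     \<subseteq> {x\<in>rademacher_set n. Fa n d a x \<ge> (\<Sum>x\<in>rademacher_set n. Fa n d a x) / 2^n + t}"
    using mean_bound[of n d a] by auto
  have "card {x\<in>rademacher_set n. Fa n d a x \<ge> sqrt (\<Sum>l<d. \<Sum>i<n. (a i l)^2) + t}
     \<le> card {x\<in>rademacher_set n. Fa n d a x \<ge> (\<Sum>x\<in>rademacher_set n. Fa n d a x) / 2^n + t}"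
    by (rule card_mono[OF _ sub]) (simp add: rad_finite)
  then show ?thesis using c by (simp add: mult.commute[of 2 "4 * B"] mult.assoc)
qed

lemma ortho_sum:
  fixes U :: "real Matrix.mat"
  assumes U: "U \<in> carrier_mat n d" and UU: "transpose_mat U * U = 1\<^sub>m d"
    and l: "l < d" and m: "m < d"
  shows "(\<Sum>i<n. U $$ (i,l) * U $$ (i,m)) = (if l = m then 1 else 0)"
proof -
  have "(transpose_mat U * U) $$ (l,m) = (\<Sum>i<n. U $$ (i,l) * U $$ (i,m))"
    using U l m by (simp add: scalar_prod_def atLeast0LessThan)
  then show ?thesis using UU l m by simp
qed

lemma ortho_quad:
  fixes U :: "real Matrix.mat"
  assumes U: "U \<in> carrier_mat n d" and UU: "transpose_mat U * U = 1\<^sub>m d"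
  shows "(\<Sum>i<n. (\<Sum>l<d. U $$ (i,l) * w l)^2) = (\<Sum>l<d. (w l)^2)"
proof -
  have "(\<Sum>i<n. (\<Sum>l<d. U $$ (i,l) * w l)^2) = (\<Sum>i<n. \<Sum>l<d. \<Sum>m<d. (U $$ (i,l) * U $$ (i,m)) * (w l * w m))"
    by (simp add: power2_eq_square sum_product algebra_simps)
  also have "\<dots> = (\<Sum>l<d. \<Sum>m<d. (\<Sum>i<n. U $$ (i,l) * U $$ (i,m)) * (w l * w m))"
    by (simp add: sum.swap[of _ "{..<n}"] sum_distrib_right)
  also have "\<dots> = (\<Sum>l<d. \<Sum>m<d. (if l = m then w l * w m else 0))"
    by (intro sum.cong refl) (simp add: ortho_sum[OF U UU])
  also have "\<dots> = (\<Sum>l<d. (w l)^2)" by (simp add: power2_eq_square)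
  finally show ?thesis .
qed

lemma wh_carrier: "walsh_hadamard k \<in> carrier_mat (2^k) (2^k)"
  unfolding walsh_hadamard_def by simp

lemma wh_sq: "i < 2^k \<Longrightarrow> j < 2^k \<Longrightarrow> (walsh_hadamard k $$ (i,j))^2 = 1 / 2^k"
  unfolding walsh_hadamard_def by (simp add: power_divide power_mult[symmetric])



lemma vnorm_eq: "vnorm v = sqrt (\<Sum>m<dim_vec v. (v $ m)^2)"
  by (simp add: vnorm_def scalar_prod_def atLeast0LessThan power2_eq_square)

lemma diag_sum_collapse:
  fixes D :: "real Matrix.mat"
  assumes D: "D \<in> carrier_mat d d" and dg: "diagonal_mat D" and l: "l < d"
  shows "(\<Sum>m<d. f m * D $$ (m,l)) = f l * D $$ (l,l)"
proof -
  have "(\<Sum>m<d. f m * D $$ (m,l)) = (\<Sum>m<d. if m = l then f l * D $$ (l,l) else 0)"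
    using D dg l unfolding diagonal_mat_def by (intro sum.cong) auto
  then show ?thesis using l by simp
qed

lemma entry:
  fixes W U D :: "real Matrix.mat" and e :: "nat \<Rightarrow> real" and c :: real
  assumes W: "W \<in> carrier_mat n n" and U: "U \<in> carrier_mat n d" and D: "D \<in> carrier_mat d d"
    and dg: "diagonal_mat D" and j: "j < n" and l: "l < d"
  shows "(W * mat_diag n e * U * (c \<cdot>\<^sub>m D)) $$ (j,l) = (\<Sum>i<n. e i * (W $$ (j,i) * U $$ (i,l) * (c * D $$ (l,l))))"
proof -
  define A where "A = W * mat_diag n e"
  have A: "A = Matrix.mat n n (\<lambda>(i,j). W $$ (i,j) * e j)"
    unfolding A_def by (rule mat_diag_mult_right[OF W])
  have AU: "(A * U) $$ (j,m) = (\<Sum>i<n. W $$ (j,i) * e i * U $$ (i,m))" if m: "m < d" for m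
    using U j m by (simp add: A scalar_prod_def atLeast0LessThan)
  have AUc: "A * U \<in> carrier_mat n d" unfolding A by (rule mult_carrier_mat[OF _ U]) simp
  have dAU: "dim_row (A * U) = n" "dim_col (A * U) = d" using AUc by auto
  have dcD: "dim_row (c \<cdot>\<^sub>m D) = d" "dim_col (c \<cdot>\<^sub>m D) = d" using D by auto
  have "(A * U * (c \<cdot>\<^sub>m D)) $$ (j,l) = Matrix.row (A * U) j \<bullet> col (c \<cdot>\<^sub>m D) l"
    by (rule index_mult_mat) (use D j l in \<open>simp_all add: A carrier_matD\<close>)
  also have "\<dots> = (\<Sum>m\<in>{0..<d}. Matrix.row (A * U) j $ m * col (c \<cdot>\<^sub>m D) l $ m)"
    unfolding scalar_prod_def using D by (simp add: carrier_matD)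
  also have "\<dots> = (\<Sum>m<d. (A * U) $$ (j,m) * (c * D $$ (m,l)))"
    unfolding atLeast0LessThan
    by (intro sum.cong refl) (use dAU dcD j l D in \<open>simp add: index_row index_col\<close>)
  also have "\<dots> = (\<Sum>m<d. ((A * U) $$ (j,m) * c) * D $$ (m,l))"
    by (simp add: algebra_simps)
  also have "\<dots> = (A * U) $$ (j,l) * c * D $$ (l,l)"
    by (rule diag_sum_collapse[OF D dg l])
  also have "\<dots> = (\<Sum>i<n. e i * (W $$ (j,i) * U $$ (i,l) * (c * D $$ (l,l))))"
    unfolding AU[OF l] sum_distrib_right by (intro sum.cong refl) (simp add: algebra_simps)
  finally show ?thesis unfolding A_def .
qed

lemma vnorm_row:
  fixes M :: "real Matrix.mat"
  assumes "M \<in> carrier_mat n d" "j < n"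
  shows "vnorm (Matrix.row M j) = sqrt (\<Sum>l<d. (M $$ (j,l))^2)"
  using assms by (simp add: vnorm_def scalar_prod_def atLeast0LessThan power2_eq_square)

lemma frob_diag:
  fixes D :: "real Matrix.mat"
  assumes D: "D \<in> carrier_mat d d" and dg: "diagonal_mat D"
  shows "(frob_norm D)^2 = (\<Sum>l<d. (D $$ (l,l))^2)"
proof -
  have "(\<Sum>i<d. \<Sum>j<d. (D $$ (i,j))^2) = (\<Sum>i<d. \<Sum>j<d. if j = i then (D $$ (i,i))^2 else 0)"
    using D dg unfolding diagonal_mat_def by (intro sum.cong refl) auto
  also have "\<dots> = (\<Sum>l<d. (D $$ (l,l))^2)" by simp
  finally show ?thesis using D by (simp add: frob_norm_def sum_nonneg)
qed

lemma op_norm_ge: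
  fixes D :: "real Matrix.mat"
  assumes D: "D \<in> carrier_mat d d" and dg: "diagonal_mat D" and nn: "\<forall>i<d. D $$ (i,i) \<ge> 0"
    and l: "l < d"
  shows "D $$ (l,l) \<le> op_norm D"
proof -
  define S where "S = {vnorm (D *\<^sub>v x) | x. x \<in> carrier_vec (dim_col D) \<and> vnorm x \<le> 1}"
  have Dx: "(D *\<^sub>v x) $ m = D $$ (m,m) * x $ m" if x: "x \<in> carrier_vec d" and m: "m < d" for x m
  proof -
    have "(D *\<^sub>v x) $ m = (\<Sum>q<d. x $ q * D $$ (m,q))"
      using D x m by (simp add: scalar_prod_def atLeast0LessThan mult.commute)
    also have "\<dots> = (\<Sum>q<d. if q = m then x $ m * D $$ (m,m) else 0)"
      using D dg m unfolding diagonal_mat_def by (intro sum.cong refl) auto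
    finally show ?thesis using m by simp
  qed
  have dimD: "dim_vec (D *\<^sub>v v) = d" for v using D by simp
  have mem: "D $$ (l,l) \<in> S"
  proof -
    have u: "unit_vec d l \<in> carrier_vec d" by simp
    have vn1: "vnorm (unit_vec d l) = 1" using l by (simp add: vnorm_def)
    have "vnorm (D *\<^sub>v unit_vec d l) = sqrt (\<Sum>m<d. (D $$ (m,m) * unit_vec d l $ m)^2)"
      unfolding vnorm_eq dimD by (intro arg_cong[where f=sqrt] sum.cong refl) (subst Dx[OF u], auto)
    also have "\<dots> = sqrt (\<Sum>m<d. if m = l then (D $$ (l,l))^2 else 0)"
      using l by (intro arg_cong[where f=sqrt] sum.cong refl) auto
    also have "\<dots> = D $$ (l,l)" using l nn by simp
    finally show ?thesis unfolding S_def using D vn1 by (intro CollectI exI[of _ "unit_vec d l"]) auto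
  qed
  have bdd: "bdd_above S"
  proof (rule bdd_aboveI)
    fix y assume "y \<in> S"
    then obtain x where y: "y = vnorm (D *\<^sub>v x)" and x: "x \<in> carrier_vec d" and xn: "vnorm x \<le> 1"
      using D unfolding S_def by auto
    have xx: "(\<Sum>m<d. (x $ m)^2) \<le> 1"
    proof -
      have "sqrt (\<Sum>m<d. (x $ m)^2) \<le> 1"
        using xn x by (simp add: vnorm_eq)
      then show ?thesis by simp
    qed
    have xm: "(x $ m)^2 \<le> 1" if m: "m < d" for m
    proof -
      have "(x $ m)^2 \<le> (\<Sum>m<d. (x $ m)^2)"
        using m by (intro member_le_sum) auto
      then show ?thesis using xx by simp
    qed
    have "y = sqrt (\<Sum>m<d. (D $$ (m,m))^2 * (x $ m)^2)"
      unfolding y vnorm_eq dimD by (intro arg_cong[where f=sqrt] sum.cong refl) (subst Dx[OF x], auto simp: power_mult_distrib)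
    also have "\<dots> \<le> sqrt (\<Sum>m<d. (D $$ (m,m))^2)"
      using xm by (intro real_sqrt_le_mono sum_mono) (auto intro: mult_left_le)
    finally show "y \<le> sqrt (\<Sum>m<d. (D $$ (m,m))^2)" .
  qed
  have "D $$ (l,l) \<le> Sup S" by (rule cSup_upper[OF mem bdd])
  then show ?thesis by (simp add: op_norm_def S_def)
qed



theorem lemma7p1:
  fixes k n d :: nat and A \<Lambda> U D V :: "real Matrix.mat" and \<nu> \<delta> :: real
  assumes n_def: "n = 2 ^ k"
    and "d \<le> n"
    and A: "A \<in> carrier_mat n d" and "A \<noteq> 0\<^sub>m n d"
    and Lam: "\<Lambda> \<in> carrier_mat d d" and "diagonal_mat \<Lambda>" and "psd_mat d (\<Lambda> - 1\<^sub>m d)"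
    and "\<nu> > 0"
    and U: "U \<in> carrier_mat n d" and "transpose_mat U * U = 1\<^sub>m d"
    and D: "D \<in> carrier_mat d d" and "diagonal_mat D" and "\<forall>i<d. D $$ (i,i) \<ge> 0"
    and V: "V \<in> carrier_mat d d" and "transpose_mat V * V = 1\<^sub>m d"
    and svd: "A * inv_sqrt_mat d (transpose_mat A * A + (\<nu>^2) \<cdot>\<^sub>m \<Lambda>) = U * D * transpose_mat V"
    and "0 < \<delta>" and "\<delta> < 1"
  shows "measure_pmf.prob (pmf_of_set (rademacher_set n))
     {\<epsilon>. Max ((\<lambda>j. vnorm (Matrix.row (walsh_hadamard k * mat_diag n \<epsilon> * U
                     * ((1 / op_norm D) \<cdot>\<^sub>m D)) j)) ` {0..<n})
          \<ge> sqrt ((frob_norm D)^2 / (op_norm D)^2 / real n)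
            + sqrt (8 * ln (real n / \<delta>) / real n)} \<le> \<delta>"
proof -
  note UU = \<open>transpose_mat U * U = 1\<^sub>m d\<close>
  note dg = \<open>diagonal_mat D\<close>
  note nn = \<open>\<forall>i<d. D $$ (i,i) \<ge> 0\<close>
  note d0 = \<open>0 < \<delta>\<close> and d1 = \<open>\<delta> < 1\<close>
  let ?O = "rademacher_set n"
  define W where "W = walsh_hadamard k"
  define c where "c = 1 / op_norm D"
  define a where "a j i l = W $$ (j,i) * U $$ (i,l) * (c * D $$ (l,l))" for j i l
  define s where "s = sqrt ((frob_norm D)^2 / (op_norm D)^2 / real n)"
  define t where "t = sqrt (8 * ln (real n / \<delta>) / real n)"
  have npos: "n > 0" using n_def by simp
  have Wc: "W \<in> carrier_mat n n" unfolding W_def n_def by (rule wh_carrier)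
  have Wsq: "(W $$ (j,i))^2 = 1 / real n" if "j < n" "i < n" for j i
    using wh_sq[of j k i] that unfolding W_def n_def by simp
  have cD: "0 \<le> c * D $$ (l,l) \<and> c * D $$ (l,l) \<le> 1" if l: "l < d" for l
  proof -
    have le: "D $$ (l,l) \<le> op_norm D" by (rule op_norm_ge[OF D dg nn l])
    have ge: "D $$ (l,l) \<ge> 0" using nn l by simp
    show ?thesis
    proof (cases "op_norm D = 0")
      case True then show ?thesis by (simp add: c_def)
    next
      case False
      then have "op_norm D > 0" using le ge by simp
      then show ?thesis using le ge by (simp add: c_def)
    qed
  qed
  have fFa: "vnorm (Matrix.row (W * mat_diag n e * U * (c \<cdot>\<^sub>m D)) j) = Fa n d (a j) e" if j: "j < n" for j e
  proof -
    have Mc: "W * mat_diag n e * U * (c \<cdot>\<^sub>m D) \<in> carrier_mat n d"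
      using Wc U D by (intro mult_carrier_mat[of _ _ d] mult_carrier_mat[of _ _ n]) auto
    show ?thesis
      unfolding vnorm_row[OF Mc j] Fa_def
      by (intro arg_cong[where f=sqrt] sum.cong refl)
         (simp add: entry[OF Wc U D dg j] a_def)
  qed
  have ortho: "(\<Sum>i<n. (\<Sum>l<d. r l * a j i l)^2) \<le> (1 / real n) * (\<Sum>l<d. (r l)^2)" if j: "j < n" for j r
  proof -
    define w where "w l = r l * (c * D $$ (l,l))" for l
    have "(\<Sum>i<n. (\<Sum>l<d. r l * a j i l)^2) = (\<Sum>i<n. (W $$ (j,i))^2 * (\<Sum>l<d. U $$ (i,l) * w l)^2)"
    proof (intro sum.cong refl)
      fix i
      have "(\<Sum>l<d. r l * a j i l) = W $$ (j,i) * (\<Sum>l<d. U $$ (i,l) * w l)"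
        by (simp add: a_def w_def sum_distrib_left algebra_simps)
      then show "(\<Sum>l<d. r l * a j i l)^2 = (W $$ (j,i))^2 * (\<Sum>l<d. U $$ (i,l) * w l)^2"
        by (simp add: power_mult_distrib)
    qed
    also have "\<dots> = (1 / real n) * (\<Sum>i<n. (\<Sum>l<d. U $$ (i,l) * w l)^2)"
      using j by (simp add: Wsq sum_distrib_left)
    also have "\<dots> = (1 / real n) * (\<Sum>l<d. (w l)^2)"
      by (simp add: ortho_quad[OF U UU])
    also have "\<dots> \<le> (1 / real n) * (\<Sum>l<d. (r l)^2)"
    proof (intro mult_left_mono sum_mono)
      fix l assume "l \<in> {..<d}"
      then have "(c * D $$ (l,l))^2 \<le> 1" using cD[of l] by (simp add: power_le_one)
      then show "(w l)^2 \<le> (r l)^2"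
        unfolding w_def power_mult_distrib by (simp add: mult_left_le)
    qed simp
    finally show ?thesis .
  qed
  have meanexpr: "(\<Sum>l<d. \<Sum>i<n. (a j i l)^2) = s^2" if j: "j < n" for j
  proof -
    have "(\<Sum>l<d. \<Sum>i<n. (a j i l)^2) = (\<Sum>l<d. (c * D $$ (l,l))^2 * (1 / real n) * (\<Sum>i<n. U $$ (i,l) * U $$ (i,l)))"
    proof (intro sum.cong refl)
      fix l assume l: "l \<in> {..<d}"
      have pt: "(a j i l)^2 = (c * D $$ (l,l))^2 * (1 / real n) * (U $$ (i,l) * U $$ (i,l))" if i: "i \<in> {..<n}" for i
      proof -
        have "(a j i l)^2 = (W $$ (j,i))^2 * (c * D $$ (l,l))^2 * (U $$ (i,l) * U $$ (i,l))"
          unfolding a_def by (simp add: power_mult_distrib power2_eq_square)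
        then show ?thesis using Wsq[OF j, of i] i by simp
      qed
      show "(\<Sum>i<n. (a j i l)^2) = (c * D $$ (l,l))^2 * (1 / real n) * (\<Sum>i<n. U $$ (i,l) * U $$ (i,l))"
        by (simp add: pt sum_distrib_left)
    qed
    also have "\<dots> = (\<Sum>l<d. (c * D $$ (l,l))^2 * (1 / real n))"
      by (intro sum.cong refl) (simp add: ortho_sum[OF U UU])
    also have "\<dots> = c^2 * (frob_norm D)^2 / real n"
      by (simp add: frob_diag[OF D dg] power_mult_distrib sum_distrib_left sum_divide_distrib)
    also have "\<dots> = s^2"
      unfolding s_def c_def using npos by (simp add: power_divide divide_nonneg_nonneg)
    finally show ?thesis .
  qed
  have s0: "s \<ge> 0" by (simp add: s_def)
  have nd: "real n / \<delta> > 1" using npos d0 d1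
    by (simp add: less_divide_eq_1)
  have lnpos: "ln (real n / \<delta>) > 0" using nd by simp
  have t0: "t > 0" unfolding t_def using lnpos npos by simp
  have tsq: "t^2 = 8 * ln (real n / \<delta>) / real n" unfolding t_def using lnpos npos by simp
  have each: "real (card {x\<in>?O. Fa n d (a j) x \<ge> s + t}) \<le> 2^n * (\<delta> / real n)" if j: "j < n" for j
  proof -
    have "real (card {x\<in>?O. Fa n d (a j) x \<ge> sqrt (\<Sum>l<d. \<Sum>i<n. (a j i l)^2) + t})
       \<le> 2^n * exp (- (t^2) / (8 * (1 / real n)))"
      by (rule abstract_main) (use npos t0 ortho[OF j] in auto)
    moreover have "sqrt (\<Sum>l<d. \<Sum>i<n. (a j i l)^2) = s" using meanexpr[OF j] s0 by simp
    moreover have "exp (- (t^2) / (8 * (1 / real n))) = \<delta> / real n"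
    proof -
      have "- (t^2) / (8 * (1 / real n)) = - ln (real n / \<delta>)" using npos by (simp add: tsq)
      then show ?thesis using npos d0 by (simp add: ln_div exp_minus exp_diff)
    qed
    ultimately show ?thesis by simp
  qed
  define E where "E = {\<epsilon>. Max ((\<lambda>j. vnorm (Matrix.row (walsh_hadamard k * mat_diag n \<epsilon> * U
                     * ((1 / op_norm D) \<cdot>\<^sub>m D)) j)) ` {0..<n})
          \<ge> sqrt ((frob_norm D)^2 / (op_norm D)^2 / real n)
            + sqrt (8 * ln (real n / \<delta>) / real n)}"
  have sub: "?O \<inter> E \<subseteq> (\<Union>j\<in>{..<n}. {x\<in>?O. Fa n d (a j) x \<ge> s + t})"
  proof
    fix x assume x: "x \<in> ?O \<inter> E"
    then have "s + t \<le> Max ((\<lambda>j. Fa n d (a j) x) ` {0..<n})"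
    proof -
      have "(\<lambda>j. vnorm (Matrix.row (walsh_hadamard k * mat_diag n x * U * ((1 / op_norm D) \<cdot>\<^sub>m D)) j)) ` {0..<n}
          = (\<lambda>j. Fa n d (a j) x) ` {0..<n}"
        using fFa unfolding W_def c_def by (intro image_cong refl) auto
      then show ?thesis using x unfolding E_def s_def t_def by simp
    qed
    then obtain j where "j \<in> {0..<n}" "s + t \<le> Fa n d (a j) x"
      using npos by (subst (asm) Max_ge_iff) auto
    then show "x \<in> (\<Union>j\<in>{..<n}. {x\<in>?O. Fa n d (a j) x \<ge> s + t})" using x by auto
  qed
  have "card (?O \<inter> E) \<le> card (\<Union>j\<in>{..<n}. {x\<in>?O. Fa n d (a j) x \<ge> s + t})"
    by (rule card_mono[OF _ sub]) (simp add: rad_finite)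
  also have "\<dots> \<le> (\<Sum>j<n. card {x\<in>?O. Fa n d (a j) x \<ge> s + t})"
    by (rule card_UN_le) simp
  finally have "real (card (?O \<inter> E)) \<le> (\<Sum>j<n. real (card {x\<in>?O. Fa n d (a j) x \<ge> s + t}))"
    by (metis (mono_tags) of_nat_le_iff of_nat_sum)
  also have "\<dots> \<le> (\<Sum>j<n. 2^n * (\<delta> / real n))"
    by (intro sum_mono each) auto
  also have "\<dots> = 2^n * \<delta>" using npos by simp
  finally have cardE: "real (card (?O \<inter> E)) \<le> 2^n * \<delta>" .
  have ne: "?O \<noteq> {}" using rad_card[of n] by (metis card.empty power_not_zero zero_neq_numeral)
  have "measure_pmf.prob (pmf_of_set ?O) E = real (card (?O \<inter> E)) / real (card ?O)"
    by (rule measure_pmf_of_set[OF ne rad_finite])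
  also have "\<dots> \<le> \<delta>" using cardE by (simp add: rad_card field_simps)
  finally show ?thesis unfolding E_def .
qed

end
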